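(* Under the standing assumptions below, define for each $j\in[d]$ and $c\in\mathbb{R}$ \[ \omega_j(c)=\begin{cases} 0, & c\le -\frac{n}{\sqrt{n+1}},\\[0.3em] \max\Big\{0,\ \hat\mu_j-\hat\sigma_j|c|\sqrt{\frac{(n+1)^2}{n^2-(n+1)c^2}}\Big\}, & -\frac{n}{\sqrt{n+1}}<c<0,\\[0.3em] \hat\mu_j+\hat\sigma_j|c|\sqrt{\frac{(n+1)^2}{n^2-(n+1)c^2}}, & 0\le c<\frac{n}{\sqrt{n+1}},\\[0.3em] +\infty, & c\ge \frac{n}{\sqrt{n+1}}. \end{cases} \] Then each $\omega_j:\mathbb{R}\to[0,\infty]$ is monotonically nondecreasing, and almost surely, for every $c\in\mathbb{R}$, \[ S^{n+1}_{\mathrm{oracle}}\le c\iff 0\le E^{n+1}_j\le \omega_j(c)\ \text{ for all } j\in[d]. \]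
   Context: Setting: $n\ge 2$ and $d\ge 1$ are integers, $[m]:=\{1,\dots,m\}$. $E^1,\dots,E^{n+1}$ are random vectors in $\mathbb{R}^d$ (residual vectors; $E^i=(E^i_1,\dots,E^i_d)$), assumed exchangeable. Assumption A: for each $j\in[d]$, the distribution of $E^i_j$ has no point masses, $E^i_j\ge 0$ almost surely, $\mathbb{E}[E^i_j]<\infty$ and $0<\mathrm{Var}(E^i_j)<\infty$; moreover, for each $j$, the values $E^1_j,\dots,E^{n+1}_j$ are almost surely pairwise distinct. Calibration statistics: $\hat\mu_j=\frac1n\sum_{i=1}^n E^i_j$ and $\hat\sigma_j=\sqrt{\frac1n\sum_{i=1}^n(E^i_j-\hat\mu_j)^2}$. Oracle statistics: $\hat\mu^{\mathrm{oracle}}_j=\frac1{n+1}\sum_{i=1}^{n+1}E^i_j$ and $\hat\sigma^{\mathrm{oracle}}_j=\sqrt{\frac1n\sum_{i=1}^{n+1}(E^i_j-\hat\mu^{\mathrm{oracle}}_j)^2}$. For $t\in\mathbb{R}^d_+$ and $\mu,\sigma\in\mathbb{R}^d$ with $\sigma_j>0$, $\Phi(t;\mu,\sigma):=\max_{1\le j\le d}\frac{t_j-\mu_j}{\sigma_j}$. Oracle scores: $S^i_{\mathrm{oracle}}:=\Phi(E^i;\hat\mu^{\mathrm{oracle}},\hat\sigma^{\mathrm{oracle}})$ for $i\in[n+1]$. *)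

theory Defs
  imports "HOL-Probability.Probability" "HOL-Combinatorics.Permutations"
begin

text \<open>A sample is x :: nat => real^'d, with x i the residual vector E^i (i = 1..n+1);
  components are indexed by the finite type 'd (so d = CARD('d) >= 1).\<close>

definition mu_hat :: "nat \<Rightarrow> (nat \<Rightarrow> real^'d) \<Rightarrow> 'd \<Rightarrow> real" where
  "mu_hat n x j = (\<Sum>i=1..n. x i $ j) / real n"

definition sigma_hat :: "nat \<Rightarrow> (nat \<Rightarrow> real^'d) \<Rightarrow> 'd \<Rightarrow> real" where
  "sigma_hat n x j = sqrt ((\<Sum>i=1..n. (x i $ j - mu_hat n x j)^2) / real n)"

definition mu_oracle :: "nat \<Rightarrow> (nat \<Rightarrow> real^'d) \<Rightarrow> 'd \<Rightarrow> real" where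
  "mu_oracle n x j = (\<Sum>i=1..n+1. x i $ j) / real (n+1)"

definition sigma_oracle :: "nat \<Rightarrow> (nat \<Rightarrow> real^'d) \<Rightarrow> 'd \<Rightarrow> real" where
  "sigma_oracle n x j = sqrt ((\<Sum>i=1..n+1. (x i $ j - mu_oracle n x j)^2) / real n)"

definition Phi :: "real^'d \<Rightarrow> real^'d \<Rightarrow> real^'d \<Rightarrow> real" where
  "Phi t m s = Max (range (\<lambda>j. (t $ j - m $ j) / s $ j))"

definition S_oracle :: "nat \<Rightarrow> (nat \<Rightarrow> real^'d) \<Rightarrow> nat \<Rightarrow> real" where
  "S_oracle n x i = Phi (x i) (\<chi> j. mu_oracle n x j) (\<chi> j. sigma_oracle n x j)"

text \<open>omega_j(c), with mu = mu_hat_j and sigma = sigma_hat_j; values in [0, +infinity].\<close>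
definition omega :: "nat \<Rightarrow> real \<Rightarrow> real \<Rightarrow> real \<Rightarrow> ereal" where
  "omega n m s c =
     (if c \<le> - (real n / sqrt (real n + 1)) then 0
      else if c < 0 then
        ereal (max 0 (m - s * \<bar>c\<bar> * sqrt ((real n + 1)^2 / ((real n)^2 - (real n + 1) * c^2))))
      else if c < real n / sqrt (real n + 1) then
        ereal (m + s * \<bar>c\<bar> * sqrt ((real n + 1)^2 / ((real n)^2 - (real n + 1) * c^2)))
      else \<infinity>)"

definition exchangeable :: "'a measure \<Rightarrow> nat \<Rightarrow> (nat \<Rightarrow> 'a \<Rightarrow> real^'d) \<Rightarrow> bool" where
  "exchangeable M n E \<longleftrightarrow>
     (\<forall>\<pi>. \<pi> permutes {1..n+1} \<longrightarrow>
        distr M (PiM {1..n+1} (\<lambda>_. borel)) (\<lambda>\<omega>. \<lambda>i\<in>{1..n+1}. E (\<pi> i) \<omega>)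
      = distr M (PiM {1..n+1} (\<lambda>_. borel)) (\<lambda>\<omega>. \<lambda>i\<in>{1..n+1}. E i \<omega>))"

end

theory Submission
  imports Defs
begin
lemma core_bound:
  fixes N \<sigma> \<delta> :: real
  assumes N: "N \<ge> 2" and sg: "\<sigma> > 0"
  shows "\<bar>N * \<delta>/((N+1) * sqrt(\<sigma>^2 + \<delta>^2/(N+1)))\<bar> < N/sqrt(N+1)"
proof -
  define s where "s = sqrt(\<sigma>^2 + \<delta>^2/(N+1))"
  have s2: "s^2 = \<sigma>^2 + \<delta>^2/(N+1)" unfolding s_def
    using N by (simp add: add_nonneg_nonneg)
  have sp: "s > 0" unfolding s_def using sg N by (simp add: add_pos_nonneg)
  have r2: "(sqrt(N+1))^2 = N+1" using N by simp
  have rp: "sqrt(N+1) > 0" using N by simp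
  have "\<bar>N * \<delta>/((N+1) * s)\<bar>^2 < (N/sqrt(N+1))^2"
  proof -
    have "\<bar>N * \<delta>/((N+1) * s)\<bar>^2 = N^2 * \<delta>^2/((N+1)^2 * s^2)"
      by (simp add: power_divide power_mult_distrib)
    also have "... < N^2/(N+1)"
    proof -
      have a: "(N+1) * s^2 = (N+1) * \<sigma>^2 + \<delta>^2" using s2 N
        by (simp add: field_simps)
      have e: "(N+1)^2 * s^2 = (N+1) * ((N+1) * \<sigma>^2 + \<delta>^2)" unfolding a[symmetric]
        by (simp add: power2_eq_square)
      moreover have "N^2 * \<delta>^2 < N^2 * ((N+1) * \<sigma>^2 + \<delta>^2)" using N sg by simp
      moreover have X: "(N+1) * \<sigma>^2 + \<delta>^2 > 0" using N sg by (simp add: add_pos_nonneg)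
      have e2: "N^2 * \<delta>^2/((N+1)^2 * s^2) = (N^2 * \<delta>^2/((N+1) * \<sigma>^2 + \<delta>^2))/(N+1)"
        unfolding e by (simp add: divide_divide_eq_left mult.commute)
      have lt: "N^2 * \<delta>^2/((N+1) * \<sigma>^2 + \<delta>^2) < N^2"
        using X \<open>N^2 * \<delta>^2 < N^2 * ((N+1) * \<sigma>^2 + \<delta>^2)\<close>
        by (simp add: pos_divide_less_eq mult.commute)
      have p1: "N + 1 > 0" using N by simp
      show ?thesis unfolding e2 using lt p1 by (rule divide_strict_right_mono)
    qed
    also have "... = (N/sqrt(N+1))^2" using r2 by (simp add: power_divide)
    finally show ?thesis .
  qed
  then show ?thesis unfolding s_def[symmetric]
    using rp N by (smt (verit) divide_nonneg_pos power_mono)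
qed

lemma core_iff:
  fixes N \<sigma> \<delta> c :: real
  assumes N: "N \<ge> 2" and sg: "\<sigma> > 0" and cb: "\<bar>c\<bar> < N/sqrt(N+1)"
  shows "(N * \<delta>/((N+1) * sqrt(\<sigma>^2 + \<delta>^2/(N+1))) \<le> c) \<longleftrightarrow>
         (if c \<ge> 0 then \<delta> \<le> \<sigma> * \<bar>c\<bar> * sqrt((N+1)^2/(N^2-(N+1) * c^2))
          else \<delta> \<le> - (\<sigma> * \<bar>c\<bar> * sqrt((N+1)^2/(N^2-(N+1) * c^2))))"
proof -
  define s where "s = sqrt(\<sigma>^2 + \<delta>^2/(N+1))"
  define D where "D = N^2-(N+1) * c^2"
  define t where "t = \<sigma> * \<bar>c\<bar> * sqrt((N+1)^2/D)"
  have s2: "s^2 = \<sigma>^2 + \<delta>^2/(N+1)" unfolding s_def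
    using N by (simp add: add_nonneg_nonneg)
  have sp: "s > 0" unfolding s_def using sg N by (simp add: add_pos_nonneg)
  have rp: "sqrt(N+1) > 0" using N by simp
  have "\<bar>c\<bar>^2 < (N/sqrt(N+1))^2"
    using cb by (intro power_strict_mono) auto
  also have "... = N^2/(N+1)" using N by (simp add: power_divide)
  finally have "c^2 * (N+1) < N^2" unfolding power2_abs using N by (simp add: pos_less_divide_eq)
  hence Dp: "D > 0" unfolding D_def by (simp add: mult.commute)
  have tn: "t \<ge> 0" unfolding t_def using sg Dp by simp
  have t2: "t^2 * D = \<sigma>^2 * c^2 * (N+1)^2" unfolding t_def using Dp
    by (simp add: power_mult_distrib)
  have a: "(N+1) * s^2 = (N+1) * \<sigma>^2 + \<delta>^2" using s2 N
    by (simp add: field_simps)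
  have key: "(N * \<delta>)^2 - (c * (N+1) * s)^2 = (\<delta>^2 - t^2) * D"
  proof -
    have "(c * (N+1) * s)^2 = c^2 * (N+1) * ((N+1) * s^2)" by (simp add: power_mult_distrib power2_eq_square)
    also have "... = c^2 * (N+1)^2 * \<sigma>^2 + c^2 * (N+1) * \<delta>^2" unfolding a by (simp add: algebra_simps power2_eq_square)
    finally show ?thesis using t2 unfolding D_def by (simp add: algebra_simps power2_eq_square)
  qed
  have le: "(N * \<delta>/((N+1) * s) \<le> c) \<longleftrightarrow> N * \<delta> \<le> c * (N+1) * s"
    using sp N by (simp add: pos_divide_le_eq mult.commute mult.left_commute)
  show ?thesis
  proof (cases "c \<ge> 0")
    case True
    show ?thesis
    proof (cases "\<delta> \<le> 0")
      case True
      have "N * \<delta> \<le> 0" using True N by (simp add: mult_nonneg_nonpos)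
      moreover have "0 \<le> c * (N+1) * s" using \<open>c \<ge> 0\<close> sp N by simp
      ultimately show ?thesis using \<open>c \<ge> 0\<close> le tn True unfolding s_def[symmetric] t_def[symmetric] D_def[symmetric]
        by auto
    next
      case False
      have "N * \<delta> \<le> c * (N+1) * s \<longleftrightarrow> (N * \<delta>)^2 \<le> (c * (N+1) * s)^2"
        using False N True sp by (intro power_mono_iff[symmetric]) auto
      also have "... \<longleftrightarrow> (N * \<delta>)^2 - (c * (N+1) * s)^2 \<le> 0" by simp
      also have "... \<longleftrightarrow> (\<delta>^2 - t^2) * D \<le> 0" by (simp only: key)
      also have "... \<longleftrightarrow> \<delta>^2 \<le> t^2" using Dp by (simp add: mult_le_0_iff)
      also have "... \<longleftrightarrow> \<delta> \<le> t" using tn False by (simp add: power2_le_iff_abs_le)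
      finally show ?thesis using True le unfolding s_def[symmetric] t_def[symmetric] D_def[symmetric] by simp
    qed
  next
    case False
    have tp: "t > 0" unfolding t_def using sg Dp False N by (intro mult_pos_pos) auto
    show ?thesis
    proof (cases "\<delta> \<ge> 0")
      case True
      have "N * \<delta> \<ge> 0" using True N by simp
      moreover have "c * (N+1) * s < 0" using False sp N by (simp add: mult_neg_pos)
      ultimately show ?thesis using False le tp True unfolding s_def[symmetric] t_def[symmetric] D_def[symmetric]
        by auto
    next
      case dn: False
      have "N * \<delta> \<le> c * (N+1) * s \<longleftrightarrow> (-c) * (N+1) * s \<le> -(N * \<delta>)" by simp
      also have "... \<longleftrightarrow> ((-c) * (N+1) * s)^2 \<le> (-(N * \<delta>))^2"
        using False N dn sp by (intro power_mono_iff[symmetric]) (auto simp: mult_nonneg_nonneg mult_nonpos_nonneg mult_nonneg_nonpos mult_neg_pos mult_pos_neg mult_le_0_iff)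
      also have "... \<longleftrightarrow> 0 \<le> (N * \<delta>)^2 - (c * (N+1) * s)^2" by (simp add: power2_eq_square)
      also have "... \<longleftrightarrow> 0 \<le> (\<delta>^2 - t^2) * D" by (simp only: key)
      also have "... \<longleftrightarrow> t^2 \<le> \<delta>^2" using Dp by (simp add: zero_le_mult_iff)
      also have "... \<longleftrightarrow> t \<le> -\<delta>" using tp dn power_mono_iff[of t "-\<delta>" 2] by simp
      finally show ?thesis using False le unfolding s_def[symmetric] t_def[symmetric] D_def[symmetric] by auto
    qed
  qed
qed


lemma D_pos:
  fixes N c :: real
  assumes N: "N \<ge> 2" and cb: "\<bar>c\<bar> < N/sqrt(N+1)"
  shows "N^2-(N+1) * c^2 > 0"
proof -
  have "\<bar>c\<bar>^2 < (N/sqrt(N+1))^2"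
    using cb by (intro power_strict_mono) auto
  also have "... = N^2/(N+1)" using N by (simp add: power_divide)
  finally have "c^2 * (N+1) < N^2" unfolding power2_abs using N by (simp add: pos_less_divide_eq)
  thus ?thesis by (simp add: mult.commute)
qed

lemma g_mono:
  fixes N u v :: real
  assumes N: "N \<ge> 2" and uv: "0 \<le> u" "u \<le> v" and vb: "v < N/sqrt(N+1)"
  shows "u * sqrt((N+1)^2/(N^2-(N+1) * u^2)) \<le> v * sqrt((N+1)^2/(N^2-(N+1) * v^2))"
proof -
  have Dv: "N^2-(N+1) * v^2 > 0" using D_pos[OF N] vb uv by simp
  have Du: "N^2-(N+1) * v^2 \<le> N^2-(N+1) * u^2" using uv N by (simp add: power_mono)
  have "(N+1)^2/(N^2-(N+1) * u^2) \<le> (N+1)^2/(N^2-(N+1) * v^2)"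
    using Dv Du by (intro divide_left_mono) auto
  hence "sqrt((N+1)^2/(N^2-(N+1) * u^2)) \<le> sqrt((N+1)^2/(N^2-(N+1) * v^2))"
    by (rule real_sqrt_le_mono)
  moreover have "0 \<le> sqrt((N+1)^2/(N^2-(N+1) * u^2))" using Dv Du by simp
  ultimately show ?thesis using uv by (intro mult_mono) auto
qed

lemma coord:
  fixes n :: nat and x :: "nat \<Rightarrow> real"
  assumes n: "n \<ge> 2" and nn: "\<forall>i\<in>{1..n+1}. 0 \<le> x i" and nz: "x (n+1) \<noteq> 0" and d12: "x 1 \<noteq> x 2"
  assumes \<mu>_def: "\<mu> = (\<Sum>i=1..n. x i) / real n"
  and \<sigma>_def: "\<sigma> = sqrt ((\<Sum>i=1..n. (x i - \<mu>)^2) / real n)"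
  and mo_def: "mo = (\<Sum>i=1..n+1. x i) / real (n+1)"
  and so_def: "so = sqrt ((\<Sum>i=1..n+1. (x i - mo)^2) / real n)"
  shows "mono (omega n \<mu> \<sigma>) \<and> (\<forall>c. 0 \<le> omega n \<mu> \<sigma> c) \<and>
         (\<forall>c. (x (n+1) - mo) / so \<le> c \<longleftrightarrow> ereal (x (n+1)) \<le> omega n \<mu> \<sigma> c)"
proof -
  define N where "N = real n"
  have N: "N \<ge> 2" unfolding N_def using n by simp
  have np: "real n > 0" using n by simp
  have sx: "(\<Sum>i=1..n. x i) = N * \<mu>" unfolding \<mu>_def N_def using np by simp
  have \<mu>0: "\<mu> \<ge> 0" unfolding \<mu>_def using nn np by (auto intro!: sum_nonneg divide_nonneg_pos)
  have "(\<Sum>i=1..n. (x i - \<mu>)) = (\<Sum>i=1..n. x i) - real n * \<mu>"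
    by (simp add: sum_subtractf)
  hence sumdev: "(\<Sum>i=1..n. (x i - \<mu>)) = 0" using sx unfolding N_def by simp
  define Q where "Q = (\<Sum>i=1..n. (x i - \<mu>)^2)"
  have Q0: "Q \<ge> 0" unfolding Q_def by (simp add: sum_nonneg)
  have Qp: "Q > 0"
  proof (rule ccontr)
    assume "\<not> Q > 0"
    hence "Q = 0" using Q0 by simp
    hence "\<forall>i\<in>{1..n}. (x i - \<mu>)^2 = 0"
      using sum_nonneg_eq_0_iff[of "{1..n}" "\<lambda>i. (x i - \<mu>)^2"] unfolding Q_def by simp
    moreover have "1 \<in> {1..n}" "2 \<in> {1..n}" using n by auto
    ultimately have "(x 1 - \<mu>)^2 = 0" "(x 2 - \<mu>)^2 = 0" by blast+
    hence "x 1 = \<mu>" "x 2 = \<mu>" by simp_all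
    thus False using d12 by simp
  qed
  have \<sigma>2: "\<sigma>^2 = Q / N" unfolding \<sigma>_def Q_def[symmetric] N_def using Q0 np by simp
  have \<sigma>p: "\<sigma> > 0" unfolding \<sigma>_def Q_def[symmetric] using Qp np by simp
  define X where "X = x (n+1)"
  define \<delta> where "\<delta> = X - \<mu>"
  have "0 \<le> X" using bspec[OF nn, of "n+1"] unfolding X_def by simp
  hence xp: "X > 0" using nz unfolding X_def by simp
  have s1: "(\<Sum>i=1..n+1. x i) = N * \<mu> + X"
    unfolding X_def using sx by simp
  have mo_eq: "mo = (N * \<mu> + X) / (N+1)" unfolding mo_def s1 N_def by simp
  have num: "X - mo = N * \<delta> / (N+1)" unfolding mo_eq \<delta>_def using N
    by (simp add: field_simps)
  have dm: "\<mu> - mo = - \<delta> / (N+1)" unfolding mo_eq \<delta>_def using N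
    by (simp add: field_simps)
  have sq1: "(\<Sum>i=1..n. (x i - mo)^2) = Q + N * (\<mu> - mo)^2"
  proof -
    have "(\<Sum>i=1..n. (x i - mo)^2) = (\<Sum>i=1..n. (x i - \<mu>)^2 + 2 * (\<mu> - mo) * (x i - \<mu>) + (\<mu> - mo)^2)"
      by (rule sum.cong) (auto simp: power2_eq_square algebra_simps)
    also have "... = Q + 2 * (\<mu> - mo) * (\<Sum>i=1..n. (x i - \<mu>)) + N * (\<mu> - mo)^2"
      unfolding Q_def N_def by (simp add: sum.distrib sum_distrib_left)
    finally show ?thesis using sumdev by simp
  qed
  have var: "(\<Sum>i=1..n+1. (x i - mo)^2) = Q + N * \<delta>^2 / (N+1)"
  proof -
    have "(\<Sum>i=1..n+1. (x i - mo)^2) = Q + N * (\<mu> - mo)^2 + (X - mo)^2"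
      using sq1 unfolding X_def by simp
    also have "... = Q + N * \<delta>^2 / (N+1)" unfolding dm num
    proof -
      have p: "N + 1 \<noteq> 0" using N by simp
      have "N * (- \<delta> / (N+1))^2 + (N * \<delta> / (N+1))^2 = (N * \<delta>^2 * (N+1)) / ((N+1) * (N+1))"
        using p by (simp add: power_divide power2_eq_square add_divide_distrib[symmetric] algebra_simps)
      also have "... = N * \<delta>^2 / (N+1)" using p by simp
      finally show "Q + N * (- \<delta> / (N+1))^2 + (N * \<delta> / (N+1))^2 = Q + N * \<delta>^2 / (N+1)" by simp
    qed
    finally show ?thesis .
  qed
  have so_eq: "so = sqrt (\<sigma>^2 + \<delta>^2 / (N+1))"
    unfolding so_def var \<sigma>2 N_def[symmetric] using N by (simp add: field_simps)
  have z_eq: "(x (n+1) - mo) / so = N * \<delta> / ((N+1) * sqrt (\<sigma>^2 + \<delta>^2 / (N+1)))"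
    unfolding X_def[symmetric] num so_eq by simp
  have om: "omega n \<mu> \<sigma> c =
     (if c \<le> - (N / sqrt (N + 1)) then 0
      else if c < 0 then
        ereal (max 0 (\<mu> - \<sigma> * \<bar>c\<bar> * sqrt ((N + 1)^2 / (N^2 - (N + 1) * c^2))))
      else if c < N / sqrt (N + 1) then
        ereal (\<mu> + \<sigma> * \<bar>c\<bar> * sqrt ((N + 1)^2 / (N^2 - (N + 1) * c^2)))
      else \<infinity>)" for c
    unfolding omega_def N_def by simp
  have bnd: "\<bar>N * \<delta> / ((N+1) * sqrt (\<sigma>^2 + \<delta>^2 / (N+1)))\<bar> < N / sqrt (N+1)"
    by (rule core_bound[OF N \<sigma>p])
  define g where "g c = \<bar>c\<bar> * sqrt ((N + 1)^2 / (N^2 - (N + 1) * c^2))" for c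
  have g0: "g c \<ge> 0" if "\<bar>c\<bar> < N / sqrt (N+1)" for c
    unfolding g_def using D_pos[OF N that] by simp
  have om2: "omega n \<mu> \<sigma> c =
     (if c \<le> - (N / sqrt (N + 1)) then 0
      else if c < 0 then ereal (max 0 (\<mu> - \<sigma> * g c))
      else if c < N / sqrt (N + 1) then ereal (\<mu> + \<sigma> * g c)
      else \<infinity>)" for c
    unfolding om g_def by (simp add: mult.assoc)
  define L where "L = N / sqrt (N + 1)"
  have Lp: "L > 0" unfolding L_def using N by simp
  have om_lo: "omega n \<mu> \<sigma> c = 0" if "c \<le> - L" for c
    using that unfolding om2 L_def by simp
  have om_neg: "omega n \<mu> \<sigma> c = ereal (max 0 (\<mu> - \<sigma> * g c))" if "- L < c" "c < 0" for c
    using that unfolding om2 L_def by simp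
  have om_pos: "omega n \<mu> \<sigma> c = ereal (\<mu> + \<sigma> * g c)" if "0 \<le> c" "c < L" for c
    using that Lp unfolding om2 L_def by simp
  have om_hi: "omega n \<mu> \<sigma> c = \<infinity>" if "L \<le> c" for c
    using that Lp unfolding om2 L_def by simp
  have g0': "g c \<ge> 0" if "- L < c" "c < L" for c
    using g0[of c] that unfolding L_def by simp
  have nonneg: "0 \<le> omega n \<mu> \<sigma> c" for c
  proof -
    consider "c \<le> - L" | "- L < c" "c < 0" | "0 \<le> c" "c < L" | "L \<le> c" by linarith
    thus ?thesis
    proof cases
      case 1 thus ?thesis using om_lo by simp
    next
      case 2
      have "ereal 0 \<le> ereal (max 0 (\<mu> - \<sigma> * g c))" by (simp only: ereal_less_eq)
      thus ?thesis using om_neg[OF 2] by (simp only: zero_ereal_def)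
    next
      case 3
      have "0 \<le> \<mu> + \<sigma> * g c" using \<mu>0 \<sigma>p g0'[of c] 3 Lp by simp
      thus ?thesis using om_pos[OF 3] by simp
    next
      case 4 thus ?thesis using om_hi by simp
    qed
  qed
  have mon: "mono (omega n \<mu> \<sigma>)"
  proof (rule monoI)
    fix a b :: real assume ab: "a \<le> b"
    show "omega n \<mu> \<sigma> a \<le> omega n \<mu> \<sigma> b"
    proof (cases "b \<ge> L")
      case True thus ?thesis using om_hi[of b] by simp
    next
      case bL: False
      show ?thesis
      proof (cases "a \<le> - L")
        case True thus ?thesis using om_lo[of a] nonneg[of b] by simp
      next
        case aL: False
        have ga: "g a \<ge> 0" using g0'[of a] aL bL ab by auto
        have gb: "g b \<ge> 0" using g0'[of b] aL bL ab by auto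
        show ?thesis
        proof (cases "b < 0")
          case True
          have "g b \<le> g a" unfolding g_def using g_mono[OF N, of "\<bar>b\<bar>" "\<bar>a\<bar>"] ab True aL
            unfolding L_def by (simp add: power2_abs)
          hence "\<mu> - \<sigma> * g a \<le> \<mu> - \<sigma> * g b" using \<sigma>p by (simp add: mult_left_mono)
          hence m: "max 0 (\<mu> - \<sigma> * g a) \<le> max 0 (\<mu> - \<sigma> * g b)" by simp
          have a1: "- L < a" "a < 0" using aL True ab by auto
          have b1: "- L < b" "b < 0" using aL True ab by auto
          show ?thesis unfolding om_neg[OF a1] om_neg[OF b1] ereal_less_eq by (rule m)
        next
          case b0: False
          show ?thesis
          proof (cases "a < 0")
            case True
            have "0 \<le> \<sigma> * g a" "0 \<le> \<sigma> * g b" using \<sigma>p ga gb by simp_all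
            hence "max 0 (\<mu> - \<sigma> * g a) \<le> \<mu> + \<sigma> * g b" using \<mu>0 by simp
            moreover have a1: "- L < a" "a < 0" using aL True by auto
            moreover have b1: "0 \<le> b" "b < L" using b0 bL by auto
            ultimately show ?thesis unfolding om_neg[OF a1] om_pos[OF b1] ereal_less_eq by simp
          next
            case False
            have "g a \<le> g b" unfolding g_def using g_mono[OF N, of "\<bar>a\<bar>" "\<bar>b\<bar>"] ab False bL
              unfolding L_def by (simp add: power2_abs)
            hence "\<mu> + \<sigma> * g a \<le> \<mu> + \<sigma> * g b" using \<sigma>p by (simp add: mult_left_mono)
            moreover have a1: "0 \<le> a" "a < L" using False ab bL by auto
            moreover have b1: "0 \<le> b" "b < L" using b0 bL by auto
            ultimately show ?thesis unfolding om_pos[OF a1] om_pos[OF b1] ereal_less_eq by simp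
          qed
        qed
      qed
    qed
  qed
  have iff: "(x (n+1) - mo) / so \<le> c \<longleftrightarrow> ereal (x (n+1)) \<le> omega n \<mu> \<sigma> c" for c
  proof -
    let ?z = "N * \<delta> / ((N+1) * sqrt (\<sigma>^2 + \<delta>^2 / (N+1)))"
    have zc: "(x (n+1) - mo) / so = ?z" by (rule z_eq)
    have bnd': "- L < ?z" "?z < L" using bnd unfolding L_def by linarith+
    consider "c \<le> - L" | "- L < c" "c < 0" | "0 \<le> c" "c < L" | "L \<le> c" by linarith
    thus ?thesis
    proof cases
      case 1
      have "\<not> ?z \<le> c" using bnd' 1 by linarith
      moreover have "\<not> ereal X \<le> 0" using xp by simp
      ultimately show ?thesis unfolding zc unfolding X_def[symmetric] om_lo[OF 1] by blast
    next
      case 2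
      have cb: "\<bar>c\<bar> < N / sqrt (N + 1)" using 2 unfolding L_def by linarith
      have ci: "?z \<le> c \<longleftrightarrow> \<delta> \<le> - (\<sigma> * g c)"
        unfolding g_def using core_iff[OF N \<sigma>p cb, of \<delta>] 2 by (simp add: mult.assoc)
      have "ereal X \<le> ereal (max 0 (\<mu> - \<sigma> * g c)) \<longleftrightarrow> X \<le> \<mu> - \<sigma> * g c"
        using xp by (simp only: ereal_less_eq) linarith
      moreover have "\<delta> \<le> - (\<sigma> * g c) \<longleftrightarrow> X \<le> \<mu> - \<sigma> * g c" unfolding \<delta>_def by linarith
      ultimately show ?thesis unfolding zc unfolding ci om_neg[OF 2] X_def[symmetric] by blast
    next
      case 3
      have cb: "\<bar>c\<bar> < N / sqrt (N + 1)" using 3 unfolding L_def by linarith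
      have ci: "?z \<le> c \<longleftrightarrow> \<delta> \<le> \<sigma> * g c"
        unfolding g_def using core_iff[OF N \<sigma>p cb, of \<delta>] 3 by (simp add: mult.assoc)
      have "\<delta> \<le> \<sigma> * g c \<longleftrightarrow> X \<le> \<mu> + \<sigma> * g c" unfolding \<delta>_def by linarith
      thus ?thesis unfolding zc unfolding ci om_pos[OF 3] X_def[symmetric] ereal_less_eq by blast
    next
      case 4
      have "?z \<le> c" using bnd' 4 by linarith
      thus ?thesis unfolding zc unfolding X_def[symmetric] om_hi[OF 4] by simp
    qed
  qed
  show ?thesis using mon nonneg iff by blast
qed

lemma det:
  fixes x :: "nat \<Rightarrow> real^'d" and n :: nat
  assumes n: "n \<ge> 2" and nn: "\<forall>j. \<forall>i\<in>{1..n+1}. 0 \<le> x i $ j"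
    and nz: "\<forall>j. x (n+1) $ j \<noteq> 0" and d12: "\<forall>j. x 1 $ j \<noteq> x 2 $ j"
  shows "(\<forall>j. mono (\<lambda>c. omega n (mu_hat n x j) (sigma_hat n x j) c)
                \<and> (\<forall>c. 0 \<le> omega n (mu_hat n x j) (sigma_hat n x j) c))
         \<and> (\<forall>c. S_oracle n x (n+1) \<le> c \<longleftrightarrow>
               (\<forall>j. 0 \<le> x (n+1) $ j \<and>
                    ereal (x (n+1) $ j) \<le> omega n (mu_hat n x j) (sigma_hat n x j) c))"
proof -
  have C: "mono (omega n (mu_hat n x j) (sigma_hat n x j)) \<and>
           (\<forall>c. 0 \<le> omega n (mu_hat n x j) (sigma_hat n x j) c) \<and>
           (\<forall>c. (x (n+1) $ j - mu_oracle n x j) / sigma_oracle n x j \<le> c \<longleftrightarrow>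
                ereal (x (n+1) $ j) \<le> omega n (mu_hat n x j) (sigma_hat n x j) c)" for j
  proof (rule coord[where x="\<lambda>i. x i $ j"])
    show "n \<ge> 2" by (rule n)
    show "\<forall>i\<in>{1..n+1}. 0 \<le> x i $ j" using nn by blast
    show "x (n+1) $ j \<noteq> 0" using nz by blast
    show "x 1 $ j \<noteq> x 2 $ j" using d12 by blast
  qed (simp_all add: mu_hat_def sigma_hat_def mu_oracle_def sigma_oracle_def)
  have x0: "0 \<le> x (n+1) $ j" for j using nn by auto
  have Sx: "S_oracle n x (n+1) = Max (range (\<lambda>j. (x (n+1) $ j - mu_oracle n x j) / sigma_oracle n x j))"
    unfolding S_oracle_def Phi_def by simp
  have "S_oracle n x (n+1) \<le> c \<longleftrightarrow> (\<forall>j. (x (n+1) $ j - mu_oracle n x j) / sigma_oracle n x j \<le> c)" for c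
    unfolding Sx by (subst Max_le_iff) auto
  thus ?thesis using C x0 by (auto simp: fun_eq_iff)
qed

theorem lemma1:
  fixes M :: "'a measure" and n :: nat and E :: "nat \<Rightarrow> 'a \<Rightarrow> real^'d"
  assumes "prob_space M"
    and "n \<ge> 2"
    and meas: "\<And>i. i \<in> {1..n+1} \<Longrightarrow> E i \<in> borel_measurable M"
    and exch: "exchangeable M n E"
    and no_atoms: "\<And>i j (x::real). i \<in> {1..n+1} \<Longrightarrow> measure M {\<omega> \<in> space M. E i \<omega> $ j = x} = 0"
    and nonneg: "\<And>i j. i \<in> {1..n+1} \<Longrightarrow> AE \<omega> in M. E i \<omega> $ j \<ge> 0"
    and mean_fin: "\<And>i j. i \<in> {1..n+1} \<Longrightarrow> integrable M (\<lambda>\<omega>. E i \<omega> $ j)"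
    and var_fin: "\<And>i j. i \<in> {1..n+1} \<Longrightarrow> integrable M (\<lambda>\<omega>. (E i \<omega> $ j)^2)"
    and var_pos: "\<And>i j. i \<in> {1..n+1} \<Longrightarrow>
        (\<integral>\<omega>. (E i \<omega> $ j - (\<integral>\<omega>'. E i \<omega>' $ j \<partial>M))^2 \<partial>M) > 0"
    and distinct: "\<And>j. AE \<omega> in M. \<forall>i\<in>{1..n+1}. \<forall>k\<in>{1..n+1}. i \<noteq> k \<longrightarrow> E i \<omega> $ j \<noteq> E k \<omega> $ j"
  shows "AE \<omega> in M.
           (\<forall>j. mono (\<lambda>c. omega n (mu_hat n (\<lambda>i. E i \<omega>) j) (sigma_hat n (\<lambda>i. E i \<omega>) j) c)
                \<and> (\<forall>c. 0 \<le> omega n (mu_hat n (\<lambda>i. E i \<omega>) j) (sigma_hat n (\<lambda>i. E i \<omega>) j) c))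
         \<and> (\<forall>c. S_oracle n (\<lambda>i. E i \<omega>) (n+1) \<le> c \<longleftrightarrow>
               (\<forall>j. 0 \<le> E (n+1) \<omega> $ j \<and>
                    ereal (E (n+1) \<omega> $ j) \<le> omega n (mu_hat n (\<lambda>i. E i \<omega>) j) (sigma_hat n (\<lambda>i. E i \<omega>) j) c))"
proof -
  interpret prob_space M by fact
  have AE1: "AE \<omega> in M. \<forall>j. \<forall>i\<in>{1..n+1}. 0 \<le> E i \<omega> $ j"
    unfolding AE_all_countable
  proof
    fix j show "AE \<omega> in M. \<forall>i\<in>{1..n+1}. 0 \<le> E i \<omega> $ j"
      by (rule AE_finite_allI) (auto intro: nonneg)
  qed
  have AE2: "AE \<omega> in M. \<forall>j. E (n+1) \<omega> $ j \<noteq> 0"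
    unfolding AE_all_countable
  proof
    fix j
    have n1: "n+1 \<in> {1..n+1}" by simp
    have bm[measurable]: "(\<lambda>\<omega>. E (n+1) \<omega> $ j) \<in> borel_measurable M"
      using mean_fin[OF n1] by (rule borel_measurable_integrable)
    have S: "{\<omega> \<in> space M. E (n+1) \<omega> $ j = 0} \<in> sets M" by measurable
    have "{\<omega> \<in> space M. \<not> E (n+1) \<omega> $ j \<noteq> 0} = {\<omega> \<in> space M. E (n+1) \<omega> $ j = 0}" by simp
    moreover have "emeasure M {\<omega> \<in> space M. E (n+1) \<omega> $ j = 0} = 0"
      using no_atoms[OF n1, of j 0] S by (simp add: emeasure_eq_measure)
    ultimately show "AE \<omega> in M. E (n+1) \<omega> $ j \<noteq> 0"
      using S by (subst AE_iff_measurable[OF S]) auto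
  qed
  have AE3: "AE \<omega> in M. \<forall>j. E 1 \<omega> $ j \<noteq> E 2 \<omega> $ j"
    unfolding AE_all_countable
  proof
    fix j
    have h: "(1::nat) \<in> {1..n+1}" "(2::nat) \<in> {1..n+1}" using \<open>n \<ge> 2\<close> by auto
    show "AE \<omega> in M. E 1 \<omega> $ j \<noteq> E 2 \<omega> $ j"
      using distinct[of j] by (rule eventually_mono) (use h in force)
  qed
  from AE1 AE2 AE3 show ?thesis
  proof eventually_elim
    case (elim \<omega>)
    show ?case by (rule det[OF \<open>n \<ge> 2\<close> elim])
  qed
qed

end
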